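(* Let $N$ be a positive integer. If there is at least one pair of palindromic numbers $A,B$ with $N=A/B$, then there are infinitely many such pairs.
   Context: A positive integer $n$ is palindromic if its binary representation (most significant digit first, no leading zeros) reads the same forwards and backwards. *)

theory Defs
  imports Main
begin

fun bin_digits :: "nat \<Rightarrow> nat list" where
  "bin_digits n = (if n = 0 then [] else n mod 2 # bin_digits (n div 2))"

declare bin_digits.simps[simp del]

definition palindromic :: "nat \<Rightarrow> bool" where
  "palindromic n \<longleftrightarrow> n > 0 \<and> rev (bin_digits n) = bin_digits n"

end

theory Submission
  imports Defs
begin

lemma bd0[simp]: "bin_digits 0 = []"
  by (subst bin_digits.simps) simp

lemma bdS: "n \<noteq> 0 \<Longrightarrow> bin_digits n = n mod 2 # bin_digits (n div 2)"
  by (subst bin_digits.simps) simp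

lemma bd_bound: "x < 2 ^ length (bin_digits x)"
proof (induction x rule: bin_digits.induct)
  case (1 n)
  show ?case
  proof (cases "n = 0")
    case True then show ?thesis by (simp add: bd0)
  next
    case False
    then have "bin_digits n = n mod 2 # bin_digits (n div 2)" by (simp add: bdS[of n])
    with 1 False show ?thesis by simp
  qed
qed

lemma bd_concat:
  "x < 2 ^ s \<Longrightarrow> y > 0 \<Longrightarrow>
   bin_digits (x + 2 ^ s * y) = bin_digits x @ replicate (s - length (bin_digits x)) 0 @ bin_digits y"
proof (induction s arbitrary: x)
  case 0
  then show ?case by (simp add: bd0)
next
  case (Suc s)
  have ne: "x + 2 ^ Suc s * y \<noteq> 0" using Suc.prems by simp
  have q: "x + 2 ^ Suc s * y = x + (2 ^ s * y) * 2" by simp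
  have m: "(x + 2 ^ Suc s * y) mod 2 = x mod 2" unfolding q by (rule mod_mult_self1)
  have d: "(x + 2 ^ Suc s * y) div 2 = x div 2 + 2 ^ s * y" unfolding q by simp
  have lt: "x div 2 < 2 ^ s" using Suc.prems by auto
  have "bin_digits (x + 2 ^ Suc s * y) = x mod 2 # bin_digits (x div 2 + 2 ^ s * y)"
    by (simp only: bdS[OF ne] m d)
  also have "\<dots> = x mod 2 # (bin_digits (x div 2) @ replicate (s - length (bin_digits (x div 2))) 0 @ bin_digits y)"
    using Suc.IH[OF lt Suc.prems(2)] by simp
  also have "\<dots> = bin_digits x @ replicate (Suc s - length (bin_digits x)) 0 @ bin_digits y"
  proof (cases "x = 0")
    case True then show ?thesis by (simp add: bd0)
  next
    case False
    then have "bin_digits x = x mod 2 # bin_digits (x div 2)" by (simp add: bdS[of x])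
    then show ?thesis by simp
  qed
  finally show ?case .
qed

lemma pal_double:
  assumes "palindromic x" "length (bin_digits x) \<le> s"
  shows "palindromic (x * (2 ^ s + 1))"
proof -
  have x0: "x > 0" and r: "rev (bin_digits x) = bin_digits x" using assms(1) by (auto simp: palindromic_def)
  have lt: "x < 2 ^ s" using bd_bound[of x] assms(2)
    by (meson less_le_trans one_le_numeral power_increasing)
  have e: "x * (2 ^ s + 1) = x + 2 ^ s * x" by simp
  have "bin_digits (x * (2 ^ s + 1)) = bin_digits x @ replicate (s - length (bin_digits x)) 0 @ bin_digits x"
    unfolding e by (rule bd_concat[OF lt x0])
  moreover have "x * (2 ^ s + 1) > 0" using x0 by simp
  ultimately show ?thesis unfolding palindromic_def using r by simp
qed

theorem theorem11:
  fixes N :: nat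
  assumes "N > 0"
    and "\<exists>A B. palindromic A \<and> palindromic B \<and> A = N * B"
  shows "infinite {(A, B). palindromic A \<and> palindromic B \<and> A = N * B}"
proof
  assume fin: "finite {(A, B). palindromic A \<and> palindromic B \<and> A = N * B}"
  obtain A B where AB: "palindromic A" "palindromic B" "A = N * B" using assms(2) by blast
  define L where "L = length (bin_digits A)"
  have BA: "B \<le> A" using AB(3) assms(1) by simp
  have BL: "length (bin_digits B) \<le> L"
  proof (rule ccontr)
    assume "\<not> ?thesis"
    then have "2 ^ L \<le> B"
    proof -
      have "B \<noteq> 0" using AB(2) by (simp add: palindromic_def)
      have "2 ^ (length (bin_digits B) - 1) \<le> B"
      proof -
        have "\<And>n. n \<noteq> 0 \<Longrightarrow> 2 ^ (length (bin_digits n) - 1) \<le> n"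
        proof -
          fix n :: nat
          show "n \<noteq> 0 \<Longrightarrow> 2 ^ (length (bin_digits n) - 1) \<le> n"
          proof (induction n rule: bin_digits.induct)
            case (1 n)
            have e: "bin_digits n = n mod 2 # bin_digits (n div 2)" using 1(2) by (simp add: bdS[of n])
            show ?case
            proof (cases "n div 2 = 0")
              case True then show ?thesis using e 1(2) by (simp add: bd0)
            next
              case False
              then have "2 ^ (length (bin_digits (n div 2)) - 1) \<le> n div 2" using 1 by simp
              moreover have "length (bin_digits (n div 2)) \<ge> 1"
                using False by (simp add: bdS[of "n div 2"])
              ultimately have "2 ^ (length (bin_digits (n div 2))) \<le> 2 * (n div 2)"
                by (metis Suc_diff_1 le_add1 less_le_trans mult_le_mono2 power_Suc zero_less_one)
              moreover have "2 * (n div 2) \<le> n" by simp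
              ultimately show ?thesis using e by simp
            qed
          qed
        qed
        then show ?thesis using \<open>B \<noteq> 0\<close> by blast
      qed
      moreover have "L \<le> length (bin_digits B) - 1" using \<open>\<not> length (bin_digits B) \<le> L\<close> by simp
      ultimately show ?thesis by (meson order_trans one_le_numeral power_increasing)
    qed
    moreover have "A < 2 ^ L" using bd_bound[of A] L_def by simp
    ultimately show False using BA by simp
  qed
  define f where "f = (\<lambda>s::nat. (A * (2 ^ s + 1), B * (2 ^ s + 1)))"
  have sub: "f ` {L..} \<subseteq> {(A, B). palindromic A \<and> palindromic B \<and> A = N * B}"
  proof
    fix p assume "p \<in> f ` {L..}"
    then obtain s where s: "s \<ge> L" "p = f s" by auto
    have "palindromic (A * (2 ^ s + 1))" using pal_double[OF AB(1)] s L_def by simp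
    moreover have "palindromic (B * (2 ^ s + 1))" using pal_double[OF AB(2)] s BL by simp
    ultimately show "p \<in> {(A, B). palindromic A \<and> palindromic B \<and> A = N * B}"
      using s AB(3) f_def by (simp add: algebra_simps)
  qed
  have B0: "B > 0" using AB(2) by (simp add: palindromic_def)
  have "inj_on f {L..}"
  proof (rule inj_onI)
    fix s t assume "f s = f t"
    then have "B * (2 ^ s + 1) = B * (2 ^ t + 1)" by (simp add: f_def)
    then have "(2::nat) ^ s = 2 ^ t" using B0 by simp
    then show "s = t" by simp
  qed
  then have "infinite (f ` {L..})" using finite_imageD infinite_Ici by blast
  then show False using sub fin finite_subset by blast
qed

end
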